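(* Let $T$ be a tree on $n\geq 4$ vertices. Then the node reliability polynomial $\mathrm{nRel}(T;p)$ has at least one point of inflection in $(0,1)$ (a point in $(0,1)$ at which the second derivative changes sign).
   Context: For a graph $G$ on $n$ vertices, a connected set is a nonempty vertex subset $C$ such that the induced subgraph $G[C]$ is connected. The node reliability of $G$ is the polynomial \[ \mathrm{nRel}(G;p)=\sum_{C}p^{|C|}(1-p)^{n-|C|}, \] the sum over all connected sets $C$ of $G$. *)

theory Defs
  imports "HOL-Analysis.Analysis"
begin

definition simple_graph :: "'a set \<Rightarrow> ('a \<Rightarrow> 'a \<Rightarrow> bool) \<Rightarrow> bool" where
  "simple_graph V E \<longleftrightarrow> finite V \<and>
     (\<forall>u v. E u v \<longrightarrow> u \<in> V \<and> v \<in> V \<and> u \<noteq> v \<and> E v u)"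

definition edges :: "'a set \<Rightarrow> ('a \<Rightarrow> 'a \<Rightarrow> bool) \<Rightarrow> 'a set set" where
  "edges V E = {{u, v} | u v. u \<in> V \<and> v \<in> V \<and> E u v}"

definition connected_set :: "'a set \<Rightarrow> ('a \<Rightarrow> 'a \<Rightarrow> bool) \<Rightarrow> 'a set \<Rightarrow> bool" where
  "connected_set V E C \<longleftrightarrow> C \<noteq> {} \<and> C \<subseteq> V \<and>
     (\<forall>u\<in>C. \<forall>v\<in>C. (\<lambda>x y. E x y \<and> x \<in> C \<and> y \<in> C)\<^sup>*\<^sup>* u v)"

definition graph_connected :: "'a set \<Rightarrow> ('a \<Rightarrow> 'a \<Rightarrow> bool) \<Rightarrow> bool" where
  "graph_connected V E \<longleftrightarrow> connected_set V E V"

definition is_tree :: "'a set \<Rightarrow> ('a \<Rightarrow> 'a \<Rightarrow> bool) \<Rightarrow> bool" where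
  "is_tree V E \<longleftrightarrow> simple_graph V E \<and> graph_connected V E \<and> card (edges V E) = card V - 1"

definition nRel :: "'a set \<Rightarrow> ('a \<Rightarrow> 'a \<Rightarrow> bool) \<Rightarrow> real \<Rightarrow> real" where
  "nRel V E p = (\<Sum>C\<in>{C. connected_set V E C}. p ^ card C * (1 - p) ^ (card V - card C))"

definition inflection_point :: "(real \<Rightarrow> real) \<Rightarrow> real \<Rightarrow> bool" where
  "inflection_point f x \<longleftrightarrow> (\<exists>d>0.
     ((\<forall>y. x - d < y \<and> y < x \<longrightarrow> deriv (deriv f) y < 0) \<and>
      (\<forall>y. x < y \<and> y < x + d \<longrightarrow> deriv (deriv f) y > 0)) \<or>
     ((\<forall>y. x - d < y \<and> y < x \<longrightarrow> deriv (deriv f) y > 0) \<and>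
      (\<forall>y. x < y \<and> y < x + d \<longrightarrow> deriv (deriv f) y < 0)))"

end

theory Submission
  imports Defs "HOL-Computational_Algebra.Polynomial"
begin


lemma cont_sign:
  fixes g :: "real poly"
  assumes "poly g r \<noteq> 0"
  shows "\<exists>d>0. \<forall>y. \<bar>y - r\<bar> < d \<longrightarrow> poly g r * poly g y > 0"
proof -
  have "isCont (poly g) r" by simp
  then obtain d where d: "d > 0" "\<forall>y. dist y r < d \<longrightarrow> dist (poly g y) (poly g r) < \<bar>poly g r\<bar>"
    using assms unfolding continuous_at_eps_delta by (metis zero_less_abs_iff)
  show ?thesis
  proof (intro exI[of _ d] conjI allI impI)
    fix y assume "\<bar>y - r\<bar> < d"
    then have "\<bar>poly g y - poly g r\<bar> < \<bar>poly g r\<bar>" using d by (simp add: dist_real_def)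
    then show "poly g r * poly g y > 0"
      by (cases "poly g r > 0") (auto simp: abs_if zero_less_mult_iff split: if_splits)
  qed (use d in auto)
qed

lemma sign_change:
  fixes q :: "real poly"
  assumes "a < b" "poly q a * poly q b < 0"
  shows "\<exists>x. a < x \<and> x < b \<and> poly q x = 0 \<and> (\<exists>d>0. \<exists>s. s \<noteq> 0 \<and>
     (\<forall>y. x - d < y \<and> y < x \<longrightarrow> s * poly q y < 0) \<and>
     (\<forall>y. x < y \<and> y < x + d \<longrightarrow> s * poly q y > 0))"
  using assms
proof (induction "degree q" arbitrary: q rule: less_induct)
  case less
  have qnz: "q \<noteq> 0" using less.prems by auto
  have "\<exists>r. a \<le> r \<and> r \<le> b \<and> poly q r = 0"
  proof (cases "poly q a < 0")
    case True
    then have "poly q b > 0" using less.prems by (simp add: mult_less_0_iff)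
    then show ?thesis using True IVT[of "poly q" a 0 b] less.prems by auto
  next
    case False
    then have "poly q b < 0" "poly q a \<ge> 0" using less.prems by (auto simp add: mult_less_0_iff)
    then show ?thesis using IVT2[of "poly q" b 0 a] less.prems by auto
  qed
  then obtain r where r: "a \<le> r" "r \<le> b" "poly q r = 0" by blast
  have rab: "a < r" "r < b" using r less.prems by (auto intro: order.not_eq_order_implies_strict)
  define k where "k = order r q"
  obtain g where g: "q = [:-r,1:]^k * g" "\<not> [:-r,1:] dvd g"
    using order_decomp[OF qnz, of r] k_def by blast
  have gr: "poly g r \<noteq> 0" using g(2) poly_eq_0_iff_dvd by blast
  have k0: "k \<noteq> 0" using r(3) qnz order_root k_def by blast
  have pq: "\<And>y. poly q y = (y - r)^k * poly g y" using g(1) by (simp add: poly_power)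
  show ?case
  proof (cases "odd k")
    case True
    obtain d where d: "d > 0" "\<forall>y. \<bar>y - r\<bar> < d \<longrightarrow> poly g r * poly g y > 0"
      using cont_sign[OF gr] by blast
    have L: "poly g r * poly q y < 0" if y: "r - d < y \<and> y < r" for y
    proof -
      have "poly g r * poly g y > 0" using d y by auto
      moreover have "(y - r)^k < 0" using y True by simp
      moreover have "poly g r * poly q y = (y-r)^k * (poly g r * poly g y)" unfolding pq by (rule mult.left_commute)
      ultimately show "poly g r * poly q y < 0" by (metis mult_neg_pos)
    qed
    have R: "poly g r * poly q y > 0" if y: "r < y \<and> y < r + d" for y
    proof -
      have "poly g r * poly g y > 0" using d y by auto
      moreover have "(y - r)^k > 0" using y True by simp
      moreover have "poly g r * poly q y = (y-r)^k * (poly g r * poly g y)" unfolding pq by (rule mult.left_commute)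
      ultimately show "poly g r * poly q y > 0" by (metis mult_pos_pos)
    qed
    show ?thesis using rab r d gr L R by blast
  next
    case False
    have pa: "(a - r)^k > 0" "(b - r)^k > 0" using False rab by (auto simp: zero_less_power_eq)
    have "poly q a * poly q b = ((a - r)^k * (b - r)^k) * (poly g a * poly g b)"
      unfolding pq by (simp add: algebra_simps)
    moreover have "(a - r)^k * (b - r)^k > 0" using pa by simp
    ultimately have gab: "poly g a * poly g b < 0" using less.prems
      by (metis mult_nonneg_nonneg less_imp_le not_less)
    have gnz: "g \<noteq> 0" using gr by auto
    have "degree q = k + degree g" unfolding g(1)
      by (subst degree_mult_eq) (use gnz in \<open>auto simp: degree_power_eq degree_linear_power\<close>)
    then have "degree g < degree q" using k0 by simp
    from less.hyps[OF this less.prems(1) gab] obtain x d s where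
      x: "a < x" "x < b" "poly g x = 0" "d > 0" "s \<noteq> 0"
      "\<forall>y. x - d < y \<and> y < x \<longrightarrow> s * poly g y < 0"
      "\<forall>y. x < y \<and> y < x + d \<longrightarrow> s * poly g y > 0" by blast
    have xr: "x \<noteq> r" using x(3) gr by auto
    define d' where "d' = min d \<bar>x - r\<bar>"
    have pos: "\<And>y. x - d' < y \<Longrightarrow> y < x + d' \<Longrightarrow> (y - r)^k > 0"
      using False unfolding d'_def by (auto simp: zero_less_power_eq)
    have L: "s * poly q y < 0" if y: "x - d' < y \<and> y < x" for y
    proof -
      have "s * poly g y < 0" using x(6) d'_def y by auto
      moreover have "(y - r)^k > 0" using pos y by auto
      moreover have "s * poly q y = (y-r)^k * (s * poly g y)" unfolding pq by (rule mult.left_commute)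
      ultimately show "s * poly q y < 0" by (metis mult_pos_neg)
    qed
    have R: "s * poly q y > 0" if y: "x < y \<and> y < x + d'" for y
    proof -
      have "s * poly g y > 0" using x(7) d'_def y by auto
      moreover have "(y - r)^k > 0" using pos y by auto
      moreover have "s * poly q y = (y-r)^k * (s * poly g y)" unfolding pq by (rule mult.left_commute)
      ultimately show "s * poly q y > 0" by (metis mult_pos_pos)
    qed
    have "d' > 0" using x(4) xr d'_def by auto
    moreover have "poly q x = 0" using pq x(3) by simp
    ultimately show ?thesis using x(1,2,5) L R by blast
  qed
qed



lemma first_step:
  assumes "(\<lambda>x y. E x y \<and> x \<in> C \<and> y \<in> C)\<^sup>*\<^sup>* u v" "u \<noteq> v"
  shows "\<exists>w. E u w \<and> w \<in> C"
  using assms by (induction rule: converse_rtranclp_induct) auto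

lemma two_nbrs:
  assumes sg: "simple_graph V E" and gc: "graph_connected V E" and n3: "card V \<ge> 3"
    and allc: "\<forall>w\<in>V. connected_set V E (V - {w})" and v: "v \<in> V"
  shows "\<exists>u1 u2. u1 \<noteq> u2 \<and> E v u1 \<and> E v u2"
proof -
  have fin: "finite V" using sg unfolding simple_graph_def by simp
  have "card (V - {v}) \<ge> 2" using n3 v fin by simp
  then have "V - {v} \<noteq> {}" by (intro notI) simp
  then obtain w where w: "w \<in> V" "w \<noteq> v" by blast
  have "(\<lambda>x y. E x y \<and> x \<in> V \<and> y \<in> V)\<^sup>*\<^sup>* v w"
    using gc v w unfolding graph_connected_def connected_set_def by simp
  then have "\<exists>x. E v x \<and> x \<in> V" by (rule first_step) (use w in simp)
  then obtain u1 where u1: "E v u1" "u1 \<in> V" by blast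
  have vu1: "v \<noteq> u1" using u1(1) sg unfolding simple_graph_def by auto
  have "card (V - {v, u1}) = card V - card {v, u1}"
    by (rule card_Diff_subset) (use u1 v fin in auto)
  then have "card (V - {v, u1}) \<ge> 1" using n3 vu1 by simp
  then have "V - {v, u1} \<noteq> {}" by (intro notI) simp
  then obtain w' where w': "w' \<in> V" "w' \<noteq> v" "w' \<noteq> u1" by blast
  have "connected_set V E (V - {u1})" using allc u1 by blast
  then have "(\<lambda>x y. E x y \<and> x \<in> V - {u1} \<and> y \<in> V - {u1})\<^sup>*\<^sup>* v w'"
    using v w' vu1 unfolding connected_set_def by simp
  then have "\<exists>x. E v x \<and> x \<in> V - {u1}" by (rule first_step) (use w' in simp)
  then obtain u2 where u2: "E v u2" "u2 \<in> V - {u1}" by blast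
  show ?thesis using u1 u2 by blast
qed

lemma cut_vertex:
  assumes t: "is_tree V E" and n3: "card V \<ge> 3"
  shows "\<exists>w\<in>V. \<not> connected_set V E (V - {w})"
proof (rule ccontr)
  assume "\<not> ?thesis"
  then have allc: "\<forall>w\<in>V. connected_set V E (V - {w})" by blast
  have sg: "simple_graph V E" and gc: "graph_connected V E" and ce: "card (edges V E) = card V - 1"
    using t unfolding is_tree_def by auto
  have fin: "finite V" using sg unfolding simple_graph_def by simp
  define Ed where "Ed = edges V E"
  have EdP: "Ed \<subseteq> Pow V" unfolding Ed_def edges_def by auto
  have finEd: "finite Ed" using finite_subset[OF EdP] fin by simp
  have e2: "card e = 2" if "e \<in> Ed" for e
    using that sg unfolding Ed_def edges_def simple_graph_def by auto
  have "(\<Sum>e\<in>Ed. card e) = (\<Sum>e\<in>Ed. \<Sum>v\<in>V. if v \<in> e then 1 else (0::nat))"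
  proof (rule sum.cong)
    fix e assume e: "e \<in> Ed"
    then have "e \<subseteq> V" using EdP by auto
    then have "V \<inter> e = e" by auto
    then show "card e = (\<Sum>v\<in>V. if v \<in> e then 1 else 0)"
      using fin by (simp add: sum.If_cases)
  qed simp
  also have "\<dots> = (\<Sum>v\<in>V. \<Sum>e\<in>Ed. if v \<in> e then 1 else (0::nat))"
    by (rule sum.swap)
  also have "\<dots> = (\<Sum>v\<in>V. card {e\<in>Ed. v \<in> e})"
    using finEd by (simp add: sum.If_cases Int_def conj_commute)
  finally have eq: "(\<Sum>e\<in>Ed. card e) = (\<Sum>v\<in>V. card {e\<in>Ed. v \<in> e})" .
  have lhs: "(\<Sum>e\<in>Ed. card e) = 2 * card Ed" using e2 by simp
  have "(\<Sum>v\<in>V. card {e\<in>Ed. v \<in> e}) \<ge> (\<Sum>v\<in>V. 2)"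
  proof (rule sum_mono)
    fix v assume v: "v \<in> V"
    obtain u1 u2 where u: "u1 \<noteq> u2" "E v u1" "E v u2" using two_nbrs[OF sg gc n3 allc v] by blast
    have inV: "u1 \<in> V" "u2 \<in> V" using u sg unfolding simple_graph_def by auto
    have "{v,u1} \<in> Ed" "{v,u2} \<in> Ed" unfolding Ed_def edges_def using u inV v by blast+
    then have sub: "{{v,u1},{v,u2}} \<subseteq> {e\<in>Ed. v \<in> e}" by simp
    have "v \<noteq> u1" "v \<noteq> u2" using u sg unfolding simple_graph_def by auto
    then have ne: "{v,u1} \<noteq> {v,u2}" using u(1) by (auto simp: doubleton_eq_iff)
    have "card {{v,u1},{v,u2}} = 2" using ne by simp
    moreover have "finite {e\<in>Ed. v \<in> e}" using finEd by simp
    ultimately show "2 \<le> card {e\<in>Ed. v \<in> e}" using card_mono[OF _ sub] by simp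
  qed
  then have "2 * card Ed \<ge> 2 * card V" using eq lhs by simp
  then show False using ce n3 unfolding Ed_def by simp
qed

lemma CS_finite: "finite V \<Longrightarrow> finite {C. connected_set V E C}"
  by (rule finite_subset[of _ "Pow V"]) (auto simp: connected_set_def)

lemma singletons:
  assumes "finite V"
  shows "card {C. connected_set V E C \<and> card C = 1} = card V"
proof -
  have "{C. connected_set V E C \<and> card C = 1} = (\<lambda>v. {v}) ` V"
    by (auto simp: connected_set_def card_Suc_eq)
  then show ?thesis by (simp add: card_image)
qed

lemma big_sets:
  assumes t: "is_tree V E" and n3: "card V \<ge> 3"
  shows "card {C. connected_set V E C \<and> card C = card V - 1} \<le> card V - 1"
proof -
  obtain w where w: "w \<in> V" "\<not> connected_set V E (V - {w})" using cut_vertex[OF t n3] by blast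
  have fin: "finite V" using t unfolding is_tree_def simple_graph_def by simp
  have "{C. connected_set V E C \<and> card C = card V - 1} \<subseteq> (\<lambda>v. V - {v}) ` (V - {w})"
  proof
    fix C assume C: "C \<in> {C. connected_set V E C \<and> card C = card V - 1}"
    then have CV: "C \<subseteq> V" and cc: "card C = card V - 1" and con: "connected_set V E C"
      by (auto simp: connected_set_def)
    have "card (V - C) = 1" using CV cc fin n3 by (simp add: card_Diff_subset finite_subset)
    then obtain v where v: "V - C = {v}" by (auto simp: card_Suc_eq)
    then have "C = V - {v}" using CV by auto
    moreover have "v \<in> V" using v by auto
    moreover have "v \<noteq> w" using w con \<open>C = V - {v}\<close> by auto
    ultimately show "C \<in> (\<lambda>v. V - {v}) ` (V - {w})" by auto
  qed
  then have "card {C. connected_set V E C \<and> card C = card V - 1} \<le> card ((\<lambda>v. V - {v}) ` (V - {w}))"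
    by (intro card_mono) (use fin in auto)
  also have "\<dots> \<le> card (V - {w})" using fin by (intro card_image_le) auto
  also have "\<dots> = card V - 1" using w fin by simp
  finally show ?thesis .
qed



lemma deriv_poly: "deriv (poly p) = poly (pderiv p)" for p :: "real poly"
  by (rule ext) (rule DERIV_imp_deriv, rule poly_DERIV)

definition DD :: "nat \<Rightarrow> nat \<Rightarrow> real \<Rightarrow> real" where
  "DD k m x = real k * x^(k-1) * (1-x)^m - real m * x^k * (1-x)^(m-1)"

lemma term_deriv: "((\<lambda>x::real. x^k * (1-x)^m) has_real_derivative DD k m x) (at x)"
  unfolding DD_def by (auto intro!: derivative_eq_intros simp: algebra_simps)

lemma sum_if_const: "finite A \<Longrightarrow> (\<Sum>x\<in>A. if P x then (c::real) else 0) = c * real (card {x\<in>A. P x})"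
  by (simp add: sum.If_cases Int_def)

lemma poly_nRel: "nRel V E = poly (\<Sum>C\<in>{C. connected_set V E C}. [:0,1:]^card C * [:1,-1:]^(card V - card C))"
  by (rule ext) (simp add: nRel_def poly_sum poly_power)


theorem theorem3p2:
  fixes V :: "'a set" and E :: "'a \<Rightarrow> 'a \<Rightarrow> bool"
  assumes "is_tree V E" and "card V \<ge> 4"
  shows "\<exists>x\<in>{0<..<1}. inflection_point (nRel V E) x"
proof -
  define n where "n = card V"
  define CS where "CS = {C. connected_set V E C}"
  have t: "is_tree V E" using assms(1) .
  have n4: "n \<ge> 4" using assms(2) n_def by simp
  have fin: "finite V" using t unfolding is_tree_def simple_graph_def by simp
  have finCS: "finite CS" unfolding CS_def using CS_finite[OF fin] .
  have VCS: "V \<in> CS" using t unfolding CS_def is_tree_def graph_connected_def by simp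
  have cardC: "1 \<le> card C \<and> card C \<le> n" if "C \<in> CS" for C
  proof -
    have "C \<subseteq> V" "C \<noteq> {}" using that unfolding CS_def connected_set_def by auto
    moreover have "finite C" using \<open>C \<subseteq> V\<close> fin finite_subset by blast
    ultimately show ?thesis using fin n_def card_mono[OF fin] by (simp add: Suc_leI card_gt_0_iff)
  qed
  have cardV: "card C = n \<longleftrightarrow> C = V" if "C \<in> CS" for C
  proof -
    have "C \<subseteq> V" using that unfolding CS_def connected_set_def by auto
    then show ?thesis using fin n_def card_subset_eq by blast
  qed
  define P where "P = (\<Sum>C\<in>CS. [:0,1:]^card C * [:1,-1:]^(n - card C) :: real poly)"
  have fP: "nRel V E = poly P" unfolding P_def CS_def n_def by (rule poly_nRel)
  have fsum: "poly P x = (\<Sum>C\<in>CS. x ^ card C * (1 - x) ^ (n - card C))" for x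
    using fun_cong[OF fP, of x] unfolding nRel_def CS_def n_def by simp
  have f1sum: "poly (pderiv P) x = (\<Sum>C\<in>CS. DD (card C) (n - card C) x)" for x
  proof -
    have "((\<lambda>x. \<Sum>C\<in>CS. x ^ card C * (1 - x) ^ (n - card C)) has_real_derivative
        (\<Sum>C\<in>CS. DD (card C) (n - card C) x)) (at x)"
      by (rule DERIV_sum) (rule term_deriv)
    moreover have "(\<lambda>x. \<Sum>C\<in>CS. x ^ card C * (1 - x) ^ (n - card C)) = poly P"
      using fsum by (rule ext[symmetric])
    ultimately show ?thesis using poly_DERIV DERIV_unique by metis
  qed
  have f0: "poly P 0 = 0"
    unfolding fsum by (rule sum.neutral) (auto dest!: cardC simp: Suc_le_eq)
  have f1: "poly P 1 = 1"
  proof -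
    have "poly P 1 = (\<Sum>C\<in>CS. if C = V then 1 else 0)"
      unfolding fsum
    proof (rule sum.cong)
      fix C assume C: "C \<in> CS"
      show "1 ^ card C * (1 - 1) ^ (n - card C) = (if C = V then 1 else (0::real))"
      proof (cases "C = V")
        case True then show ?thesis using cardV[OF C] by simp
      next
        case False then have "card C < n" using cardV[OF C] cardC[OF C] by simp
        then show ?thesis using False by simp
      qed
    qed simp
    also have "\<dots> = 1" using finCS VCS by simp
    finally show ?thesis .
  qed
  have d0: "poly (pderiv P) 0 = real n"
  proof -
    have "poly (pderiv P) 0 = (\<Sum>C\<in>CS. if card C = 1 then 1 else 0)"
      unfolding f1sum by (rule sum.cong) (auto dest!: cardC simp: DD_def Suc_le_eq power_0_left)
    also have "\<dots> = real (card {C\<in>CS. card C = 1})" using sum_if_const[OF finCS] by simp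
    also have "{C\<in>CS. card C = 1} = {C. connected_set V E C \<and> card C = 1}" unfolding CS_def by simp
    also have "card \<dots> = n" using singletons[OF fin] n_def by simp
    finally show ?thesis .
  qed
  have d1: "poly (pderiv P) 1 \<ge> 1"
  proof -
    have "poly (pderiv P) 1 = (\<Sum>C\<in>CS. (if card C = n then real n else 0) - (if card C = n - 1 then 1 else 0))"
      unfolding f1sum
    proof (rule sum.cong)
      fix C assume C: "C \<in> CS"
      then have k: "1 \<le> card C" "card C \<le> n" using cardC by auto
      show "DD (card C) (n - card C) 1 = (if card C = n then real n else 0) - (if card C = n - 1 then 1 else 0)"
      proof (cases "card C = n")
        case True then show ?thesis using n4 by (simp add: DD_def)
      next
        case False
        then have "n - card C \<ge> 1" using k by simp
        then obtain m where m: "n - card C = Suc m" using not0_implies_Suc by fastforce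
        show ?thesis using False m n4 k by (cases m) (auto simp: DD_def)
      qed
    qed simp
    also have "\<dots> = real n * real (card {C\<in>CS. card C = n}) - real (card {C\<in>CS. card C = n - 1})"
      using finCS by (simp add: sum_subtractf sum_if_const)
    also have "{C\<in>CS. card C = n} = {V}" using cardV VCS by auto
    also have "{C\<in>CS. card C = n - 1} = {C. connected_set V E C \<and> card C = card V - 1}"
      unfolding CS_def n_def by simp
    finally have eq: "poly (pderiv P) 1 = real n - real (card {C. connected_set V E C \<and> card C = card V - 1})"
      by simp
    have "card {C. connected_set V E C \<and> card C = card V - 1} \<le> n - 1"
      using big_sets[OF t] n4 n_def by simp
    then show ?thesis unfolding eq using n4 by linarith
  qed
  define Q where "Q = pderiv (pderiv P)"
  have contd: "continuous_on A (poly p)" for A and p :: "real poly"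
    by (rule continuous_at_imp_continuous_on) simp
  have derQ: "\<And>x. (poly (pderiv P) has_real_derivative poly Q x) (at x)"
    using poly_DERIV unfolding Q_def by simp
  have A: "\<exists>a. 0 < a \<and> a < 1 \<and> poly Q a < 0"
  proof (rule ccontr)
    assume "\<not> ?thesis"
    then have nn: "\<And>x. 0 < x \<Longrightarrow> x < 1 \<Longrightarrow> poly Q x \<ge> 0" by force
    obtain z where z: "0 < z" "z < 1" "poly P 1 - poly P 0 = (1 - 0) * poly (pderiv P) z"
      using MVT2[of 0 1 "poly P" "poly (pderiv P)", OF _ poly_DERIV] by force
    have "poly (pderiv P) 0 \<le> poly (pderiv P) z"
    proof (rule DERIV_nonneg_imp_increasing_open[of 0 z])
      fix x :: real assume "0 < x" "x < z"
      then show "\<exists>y. (poly (pderiv P) has_real_derivative y) (at x) \<and> y \<ge> 0"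
        using derQ nn z by (intro exI[of _ "poly Q x"]) auto
    qed (use z contd in auto)
    then show False using z f0 f1 d0 n4 by simp
  qed
  have B: "\<exists>b. 0 < b \<and> b < 1 \<and> poly Q b > 0"
  proof (rule ccontr)
    assume "\<not> ?thesis"
    then have np: "\<And>x. 0 < x \<Longrightarrow> x < 1 \<Longrightarrow> poly Q x \<le> 0" by force
    have dec: "poly (pderiv P) t \<le> poly (pderiv P) s" if "0 \<le> s" "s \<le> t" "t \<le> 1" for s t
    proof (rule DERIV_nonpos_imp_decreasing_open[of s t])
      fix x :: real assume "s < x" "x < t"
      then show "\<exists>y. (poly (pderiv P) has_real_derivative y) (at x) \<and> y \<le> 0"
        using derQ np that by (intro exI[of _ "poly Q x"]) auto
    qed (use that contd in auto)
    have "isCont (poly (pderiv P)) 0" by simp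
    moreover have "real n - 1 > 0" using n4 by simp
    ultimately obtain d where d: "d > 0" "\<forall>y. dist y 0 < d \<longrightarrow> dist (poly (pderiv P) y) (poly (pderiv P) 0) < real n - 1"
      unfolding continuous_at_eps_delta by blast
    define c where "c = min (d/2) (1/2)"
    have c: "0 < c" "c < 1" "dist c 0 < d" using d(1) unfolding c_def by (auto simp: dist_real_def)
    have fc: "poly (pderiv P) c > 1" using d(2) c(3) d0 by (auto simp: dist_real_def abs_if split: if_splits)
    obtain z1 where z1: "0 < z1" "z1 < c" "poly P c - poly P 0 = (c - 0) * poly (pderiv P) z1"
      using MVT2[of 0 c "poly P" "poly (pderiv P)", OF _ poly_DERIV] c by force
    obtain z2 where z2: "c < z2" "z2 < 1" "poly P 1 - poly P c = (1 - c) * poly (pderiv P) z2"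
      using MVT2[of c 1 "poly P" "poly (pderiv P)", OF _ poly_DERIV] c by force
    have "poly (pderiv P) z1 > 1" using dec[of z1 c] z1 c fc by simp
    then have m1: "c * poly (pderiv P) z1 > c * 1" using c by (intro mult_strict_left_mono) auto
    have "poly (pderiv P) z2 \<ge> 1" using dec[of z2 1] z2 d1 c by simp
    then have m2: "(1 - c) * poly (pderiv P) z2 \<ge> (1 - c) * 1" using c by (intro mult_left_mono) auto
    have "poly P c = c * poly (pderiv P) z1" using z1(3) f0 by simp
    moreover have "c * 1 = c" "(1 - c) * 1 = 1 - c" by simp_all
    ultimately show False using m1 m2 z2(3) f1 by linarith
  qed
  obtain a where a: "0 < a" "a < 1" "poly Q a < 0" using A by blast
  obtain b where b: "0 < b" "b < 1" "poly Q b > 0" using B by blast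
  have "\<exists>x. min a b < x \<and> x < max a b \<and> poly Q x = 0 \<and> (\<exists>d>0. \<exists>s. s \<noteq> 0 \<and>
     (\<forall>y. x - d < y \<and> y < x \<longrightarrow> s * poly Q y < 0) \<and>
     (\<forall>y. x < y \<and> y < x + d \<longrightarrow> s * poly Q y > 0))"
  proof (cases "a < b")
    case True
    then show ?thesis using sign_change[of a b Q] a b by (simp add: mult_neg_pos)
  next
    case False
    then have "b < a" using a b by (cases "a = b") auto
    then show ?thesis using sign_change[of b a Q] a b by (simp add: mult_pos_neg)
  qed
  then obtain x d s where x: "min a b < x" "x < max a b" "d > 0" "s \<noteq> 0"
     "\<forall>y. x - d < y \<and> y < x \<longrightarrow> s * poly Q y < 0"
     "\<forall>y. x < y \<and> y < x + d \<longrightarrow> s * poly Q y > 0" by blast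
  have x01: "x \<in> {0<..<1}" using x(1,2) a b by auto
  have dd: "deriv (deriv (nRel V E)) = poly Q" unfolding fP Q_def deriv_poly ..
  have "inflection_point (nRel V E) x"
    unfolding inflection_point_def dd
  proof (intro exI[of _ d] conjI)
    show "d > 0" using x(3) .
  next
    show "(\<forall>y. x - d < y \<and> y < x \<longrightarrow> poly Q y < 0) \<and> (\<forall>y. x < y \<and> y < x + d \<longrightarrow> 0 < poly Q y) \<or>
      (\<forall>y. x - d < y \<and> y < x \<longrightarrow> 0 < poly Q y) \<and> (\<forall>y. x < y \<and> y < x + d \<longrightarrow> poly Q y < 0)"
    proof (cases "s > 0")
      case True
      then show ?thesis using x(5,6) by (auto simp: mult_less_0_iff zero_less_mult_iff)
    next
      case False
      then have "s < 0" using x(4) by simp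
      then show ?thesis using x(5,6) by (auto simp: mult_less_0_iff zero_less_mult_iff)
    qed
  qed
  then show ?thesis using x01 by blast
qed


end
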